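(* Let $n$ be a positive integer and $S\subseteq\mathbb{Z}_n$ nonempty with $0\notin S$ and $S=-S$. A subset $C$ of $\mathbb{Z}_n$ is a total perfect code in $\mathrm{Cay}(\mathbb{Z}_n,S)$ if and only if there exists $q(x)\in\mathbb{Z}[x]$ such that $$f_C(x)\, f_{S}(x) = (x^n-1)\,q(x) + (x^{n-1}+\cdots+x+1).$$
   Context: Elements of $\mathbb{Z}_n$ are identified with integers in $\{0,1,\dots,n-1\}$. For a nonempty finite set $A$ of nonnegative integers, $f_A(x)=\sum_{a\in A}x^a$. The circulant graph $\mathrm{Cay}(\mathbb{Z}_n,S)$ has vertex set $\mathbb{Z}_n$ with $u,v$ adjacent iff $v-u\in S$. A total perfect code in a graph $\Gamma=(V,E)$ is a subset $C\subseteq V$ such that every vertex of $V$ has exactly one neighbour in $C$. *)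

theory Defs
  imports "HOL-Computational_Algebra.Polynomial"
begin

(* Z_n is modelled by {0..<n} :: nat set, with arithmetic mod n. *)

definition zneg :: "nat \<Rightarrow> nat \<Rightarrow> nat" where
  "zneg n a = (n - a mod n) mod n"

definition fpoly :: "nat set \<Rightarrow> int poly" where
  "fpoly A = (\<Sum>a\<in>A. monom 1 a)"

definition cay_adj :: "nat \<Rightarrow> nat set \<Rightarrow> nat \<Rightarrow> nat \<Rightarrow> bool" where
  "cay_adj n S u v \<longleftrightarrow> u < n \<and> v < n \<and> (v + n - u) mod n \<in> S"

definition total_perfect_code :: "nat \<Rightarrow> nat set \<Rightarrow> nat set \<Rightarrow> bool" where
  "total_perfect_code n S C \<longleftrightarrow> C \<subseteq> {0..<n} \<and>
     (\<forall>v\<in>{0..<n}. \<exists>!c. c \<in> C \<and> cay_adj n S v c)"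

end

theory Submission
  imports Defs
begin

lemma sub1_dvd_pow: "((a::'a::comm_ring_1) - 1) dvd (a ^ q - 1)"
proof (induction q)
  case 0 then show ?case by simp
next
  case (Suc q)
  have e: "a ^ Suc q - 1 = a * (a ^ q - 1) + (a - 1)" by (simp add: algebra_simps)
  have "(a - 1) dvd a * (a ^ q - 1) + (a - 1)" using Suc by (intro dvd_add dvd_mult) auto
  then show ?case by (subst e)
qed

lemma monom_pow: "(monom (1::int) n) ^ q = monom 1 (q * n)"
  by (induction q) (auto simp: mult_monom add.commute)

lemma monom_mod_dvd:
  "(monom (1::int) n - 1) dvd (monom 1 k - monom 1 (k mod n))"
proof -
  have k: "k = (k div n) * n + k mod n" by simp
  have "monom (1::int) k - monom 1 (k mod n) = monom 1 (k mod n) * ((monom 1 n) ^ (k div n) - 1)"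
    apply (subst k) by (simp add: monom_pow mult_monom algebra_simps)
  moreover have "(monom (1::int) n - 1) dvd monom 1 (k mod n) * ((monom 1 n) ^ (k div n) - 1)"
    by (intro dvd_mult sub1_dvd_pow)
  ultimately show ?thesis by simp
qed

lemma mod_lt2: assumes "(x::nat) < 2 * n" shows "x mod n = (if x < n then x else x - n)"
proof (cases "x < n")
  case True then show ?thesis by simp
next
  case False
  then have "x mod n = (x - n) mod n" by (simp add: le_mod_geq)
  also have "\<dots> = x - n" using False assms by simp
  finally show ?thesis using False by simp
qed

lemma mod_eq_iff:
  assumes "(c::nat) < n" "v < n" "s < n"
  shows "(c + s) mod n = v \<longleftrightarrow> s = (v + n - c) mod n"
proof -
  have a: "(c + s) mod n = (if c + s < n then c + s else c + s - n)"
    using assms mod_lt2[of "c + s" n] by simp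
  have b: "(v + n - c) mod n = (if v + n - c < n then v + n - c else v + n - c - n)"
    using assms mod_lt2[of "v + n - c" n] by simp
  show ?thesis unfolding a b using assms by auto
qed

lemma zneg_mod:
  assumes "(c::nat) < n" "v < n"
  shows "zneg n ((v + n - c) mod n) = (c + n - v) mod n"
proof -
  have b: "(v + n - c) mod n = (if v + n - c < n then v + n - c else v + n - c - n)"
    using assms mod_lt2[of "v + n - c" n] by simp
  have c: "(c + n - v) mod n = (if c + n - v < n then c + n - v else c + n - v - n)"
    using assms mod_lt2[of "c + n - v" n] by simp
  show ?thesis unfolding zneg_def b c using assms by (auto simp: le_mod_geq)
qed

lemma zneg_zneg: "x < n \<Longrightarrow> zneg n (zneg n x) = x"
  unfolding zneg_def
  by (cases "x = 0") (auto simp: le_mod_geq)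

theorem lemma2p4:
  fixes n :: nat and S C :: "nat set"
  assumes "n > 0"
    and "S \<subseteq> {0..<n}" and "S \<noteq> {}" and "0 \<notin> S"
    and "zneg n ` S = S"
    and "C \<subseteq> {0..<n}"
  shows "total_perfect_code n S C \<longleftrightarrow>
    (\<exists>q :: int poly. fpoly C * fpoly S = (monom 1 n - 1) * q + (\<Sum>i<n. monom 1 i))"
proof -
  have finC: "finite C" using assms(6) finite_subset by blast
  have finS: "finite S" using assms(2) finite_subset by blast
  define P where "P = monom (1::int) n - 1"
  define R where "R = (\<Sum>c\<in>C. \<Sum>s\<in>S. monom (1::int) ((c + s) mod n))"
  define T where "T = (\<Sum>i<n. monom (1::int) i)"
  have prod: "fpoly C * fpoly S = (\<Sum>c\<in>C. \<Sum>s\<in>S. monom (1::int) (c + s))"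
    unfolding fpoly_def by (simp add: sum_product mult_monom)
  have d1: "P dvd (fpoly C * fpoly S - R)"
    unfolding prod R_def P_def
    by (simp add: sum_subtractf[symmetric] dvd_sum monom_mod_dvd)
  have degP: "degree P = n"
  proof -
    have "P = monom 1 n + (- 1)" unfolding P_def by simp
    also have "degree \<dots> = degree (monom (1::int) n)"
      by (rule degree_add_eq_left) (simp add: degree_monom_eq assms(1))
    finally show ?thesis by (simp add: degree_monom_eq)
  qed
  have degR: "degree R < n"
    unfolding R_def
    by (intro degree_sum_less assms(1)) (auto intro!: le_less_trans[OF degree_monom_le] simp: assms(1))
  have degT: "degree T < n"
    unfolding T_def
    by (intro degree_sum_less assms(1)) (auto intro!: le_less_trans[OF degree_monom_le])
  have ex_iff: "(\<exists>q. fpoly C * fpoly S = P * q + T) \<longleftrightarrow> R = T"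
  proof
    assume "\<exists>q. fpoly C * fpoly S = P * q + T"
    then obtain q where q: "fpoly C * fpoly S = P * q + T" by blast
    have "P dvd (fpoly C * fpoly S - T)" using q by simp
    then have "P dvd ((fpoly C * fpoly S - T) - (fpoly C * fpoly S - R))"
      using d1 by (rule dvd_diff)
    then have dv: "P dvd (R - T)" by simp
    show "R = T"
    proof (rule ccontr)
      assume "R \<noteq> T"
      then have "R - T \<noteq> 0" by simp
      from dvd_imp_degree_le[OF dv this] have "n \<le> degree (R - T)" using degP by simp
      moreover have "degree (R - T) < n"
        using degR degT by (metis degree_diff_le_max le_less_trans max_less_iff_conj)
      ultimately show False by simp
    qed
  next
    assume "R = T"
    then obtain q where "fpoly C * fpoly S - R = P * q" using d1 by (auto elim!: dvdE)
    then have "fpoly C * fpoly S = P * q + T" using \<open>R = T\<close> by (simp add: algebra_simps)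
    then show "\<exists>q. fpoly C * fpoly S = P * q + T" by blast
  qed
  define Q where "Q v c \<longleftrightarrow> (v + n - c) mod n \<in> S" for v c
  have cardS: "card {s\<in>S. (c + s) mod n = v} = (if Q v c then 1 else 0)"
    if "c < n" "v < n" for c v
  proof -
    have "{s\<in>S. (c + s) mod n = v} = {s\<in>S. s = (v + n - c) mod n}"
    proof (intro Collect_cong conj_cong refl)
      fix s assume "s \<in> S"
      then have "s < n" using assms(2) by auto
      then show "(c + s) mod n = v \<longleftrightarrow> s = (v + n - c) mod n" by (rule mod_eq_iff[OF that])
    qed
    also have "\<dots> = (if (v + n - c) mod n \<in> S then {(v + n - c) mod n} else {})" by auto
    finally show ?thesis unfolding Q_def by simp
  qed
  have coeffR: "coeff R v = of_nat (card {c\<in>C. Q v c})" if "v < n" for v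
  proof -
    have "coeff R v = (\<Sum>c\<in>C. \<Sum>s\<in>S. if (c + s) mod n = v then 1 else 0)"
      unfolding R_def by (simp add: coeff_sum coeff_monom eq_commute)
    also have "\<dots> = (\<Sum>c\<in>C. of_nat (card {s\<in>S. (c + s) mod n = v}))"
      using finS by (simp add: sum.If_cases) (simp only: Int_def mem_Collect_eq)
    also have "\<dots> = (\<Sum>c\<in>C. if Q v c then 1 else 0)"
      using assms(6) that by (intro sum.cong) (auto simp: cardS)
    also have "\<dots> = of_nat (card {c\<in>C. Q v c})"
      using finC by (simp add: sum.If_cases) (simp only: Int_def mem_Collect_eq)
    finally show ?thesis .
  qed
  have coeffT: "coeff T v = (if v < n then 1 else 0)" for v
    unfolding T_def by (simp add: coeff_sum coeff_monom)
  have coeffR0: "coeff R v = 0" if "v \<ge> n" for v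
    using degR that by (simp add: coeff_eq_0)
  have RT: "R = T \<longleftrightarrow> (\<forall>v<n. card {c\<in>C. Q v c} = 1)"
  proof
    assume "R = T"
    then show "\<forall>v<n. card {c\<in>C. Q v c} = 1"
      using coeffR coeffT by (metis of_nat_eq_1_iff)
  next
    assume h: "\<forall>v<n. card {c\<in>C. Q v c} = 1"
    show "R = T"
    proof (rule poly_eqI)
      fix v show "coeff R v = coeff T v"
        using h coeffR coeffT coeffR0 by (cases "v < n") auto
    qed
  qed
  have Sneg: "x \<in> S \<longleftrightarrow> zneg n x \<in> S" if "x < n" for x
  proof
    assume "x \<in> S" then show "zneg n x \<in> S" using assms(5) by blast
  next
    assume "zneg n x \<in> S"
    then have "zneg n (zneg n x) \<in> S" using assms(5) by blast
    then show "x \<in> S" using zneg_zneg[OF that] by simp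
  qed
  have adjQ: "cay_adj n S v c \<longleftrightarrow> c \<in> {0..<n} \<and> Q v c" if "v < n" "c \<in> C" for v c
  proof -
    have cn: "c < n" using that assms(6) by auto
    have "Q v c \<longleftrightarrow> zneg n ((v + n - c) mod n) \<in> S"
      unfolding Q_def using Sneg[of "(v + n - c) mod n"] assms(1) by simp
    also have "\<dots> \<longleftrightarrow> (c + n - v) mod n \<in> S" using zneg_mod[OF cn that(1)] by simp
    finally show ?thesis unfolding cay_adj_def using that cn by auto
  qed
  have tpc: "total_perfect_code n S C \<longleftrightarrow> (\<forall>v<n. card {c\<in>C. Q v c} = 1)"
  proof -
    have "(\<exists>!c. c \<in> C \<and> cay_adj n S v c) \<longleftrightarrow> card {c\<in>C. Q v c} = 1" if "v < n" for v
    proof -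
      have "{c. c \<in> C \<and> cay_adj n S v c} = {c\<in>C. Q v c}"
        using adjQ[OF that] assms(6) by auto
      then show ?thesis by (simp add: card_1_singleton_iff Ex1_def set_eq_iff) (metis)
    qed
    then show ?thesis unfolding total_perfect_code_def using assms(6) by auto
  qed
  show ?thesis using tpc RT ex_iff unfolding P_def T_def by simp
qed

end
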